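(* Let $M$ be a magma satisfying $(xy)z = xz$ and $x(yz) = xz$ for all $x,y,z\in M$. Then $M$ satisfies the identities $(xy)z = x(yz)$ and $x(yx) = x$ for all $x,y,z\in M$ (i.e. $M$ is a rectangular band) if and only if $M$ avoids the $2$-element null semigroup $2_N$ on $\{0,1\}$ with Cayley table \[ \begin{array}{c|cc} 2_{N} & 0 & 1 \\ \hline 0 & 0 & 0 \\ 1 & 0 & 0 \end{array}. \]
   Context: A magma is a nonempty set with a binary operation, written by juxtaposition. A magma $M$ avoids a magma $F$ if no submagma of $M$ is isomorphic to $F$. *)

theory Defs
  imports Main
begin

definition magma :: "'a set \<Rightarrow> ('a \<Rightarrow> 'a \<Rightarrow> 'a) \<Rightarrow> bool" where
  "magma M f \<longleftrightarrow> M \<noteq> {} \<and> (\<forall>x\<in>M. \<forall>y\<in>M. f x y \<in> M)"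

definition submagma :: "'a set \<Rightarrow> 'a set \<Rightarrow> ('a \<Rightarrow> 'a \<Rightarrow> 'a) \<Rightarrow> bool" where
  "submagma S M f \<longleftrightarrow> S \<noteq> {} \<and> S \<subseteq> M \<and> (\<forall>x\<in>S. \<forall>y\<in>S. f x y \<in> S)"

definition magma_iso :: "('b \<Rightarrow> 'a) \<Rightarrow> 'b set \<Rightarrow> ('b \<Rightarrow> 'b \<Rightarrow> 'b) \<Rightarrow> 'a set \<Rightarrow> ('a \<Rightarrow> 'a \<Rightarrow> 'a) \<Rightarrow> bool" where
  "magma_iso h A g B f \<longleftrightarrow> bij_betw h A B \<and> (\<forall>x\<in>A. \<forall>y\<in>A. h (g x y) = f (h x) (h y))"

definition avoids :: "'a set \<Rightarrow> ('a \<Rightarrow> 'a \<Rightarrow> 'a) \<Rightarrow> 'b set \<Rightarrow> ('b \<Rightarrow> 'b \<Rightarrow> 'b) \<Rightarrow> bool" where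
  "avoids M f F g \<longleftrightarrow> \<not> (\<exists>S. submagma S M f \<and> (\<exists>h. magma_iso h F g S f))"

definition null2_carrier :: "nat set" where "null2_carrier = {0, 1}"
definition null2_op :: "nat \<Rightarrow> nat \<Rightarrow> nat" where "null2_op x y = 0"

end

theory Submission
  imports Defs
begin

theorem mainTheorem2:
  fixes M :: "'a set" and f :: "'a \<Rightarrow> 'a \<Rightarrow> 'a"
  assumes "magma M f"
    and "\<forall>x\<in>M. \<forall>y\<in>M. \<forall>z\<in>M. f (f x y) z = f x z"
    and "\<forall>x\<in>M. \<forall>y\<in>M. \<forall>z\<in>M. f x (f y z) = f x z"
  shows "((\<forall>x\<in>M. \<forall>y\<in>M. \<forall>z\<in>M. f (f x y) z = f x (f y z))
            \<and> (\<forall>x\<in>M. \<forall>y\<in>M. f x (f y x) = x))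
         \<longleftrightarrow> avoids M f null2_carrier null2_op"
proof
  assume L: "(\<forall>x\<in>M. \<forall>y\<in>M. \<forall>z\<in>M. f (f x y) z = f x (f y z))
            \<and> (\<forall>x\<in>M. \<forall>y\<in>M. f x (f y x) = x)"
  have idem: "\<forall>x\<in>M. f x x = x" proof
    fix x assume "x \<in> M"
    then have "f x (f x x) = x" using L by blast
    moreover have "f x (f x x) = f x x" using assms(3) \<open>x \<in> M\<close> by blast
    ultimately show "f x x = x" by simp
  qed
  show "avoids M f null2_carrier null2_op"
    unfolding avoids_def
  proof
    assume "\<exists>S. submagma S M f \<and> (\<exists>h. magma_iso h null2_carrier null2_op S f)"
    then obtain S h where S: "submagma S M f" and h: "magma_iso h null2_carrier null2_op S f" by blast
    have bij: "bij_betw h {0,1} S" and hom: "\<forall>x\<in>{0,1}. \<forall>y\<in>{0,1}. h (null2_op x y) = f (h x) (h y)"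
      using h unfolding magma_iso_def null2_carrier_def by auto
    have "h 1 \<in> M" using bij S unfolding submagma_def bij_betw_def by auto
    have "h (null2_op 1 1) = f (h 1) (h 1)" using hom by blast
    then have "h 0 = f (h 1) (h 1)" unfolding null2_op_def .
    also have "\<dots> = h 1" using idem \<open>h 1 \<in> M\<close> by blast
    finally have e: "h 0 = h 1" .
    have "inj_on h {0,1}" using bij by (simp add: bij_betw_def)
    then have "(0::nat) = 1" using e by (rule inj_onD) simp_all
    then show False by simp
  qed
next
  assume A: "avoids M f null2_carrier null2_op"
  have clo: "\<forall>x\<in>M. \<forall>y\<in>M. f x y \<in> M" using assms(1) unfolding magma_def by blast
  have idem: "\<forall>x\<in>M. f x x = x"
  proof (rule ccontr)
    assume "\<not> (\<forall>x\<in>M. f x x = x)"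
    then obtain x where x: "x \<in> M" "f x x \<noteq> x" by blast
    define a where "a = f x x"
    have aM: "a \<in> M" using clo x a_def by blast
    have xa: "f x a = a" using assms(3) x a_def by blast
    have ax: "f a x = a" using assms(2) x a_def by blast
    have aa: "f a a = a" using assms(2) x aM xa unfolding a_def by simp
    have ne: "a \<noteq> x" using x(2) a_def by simp
    have xx: "f x x = a" using a_def by simp
    let ?h = "\<lambda>n::nat. if n = 0 then a else x"
    have sub: "submagma {a, x} M f" unfolding submagma_def using x aM xa ax aa xx by auto
    have b: "bij_betw ?h {0,1} {a,x}" unfolding bij_betw_def inj_on_def using ne by auto
    have hm: "\<forall>m\<in>{0::nat,1}. \<forall>n\<in>{0,1}. ?h (null2_op m n) = f (?h m) (?h n)"
      unfolding null2_op_def using xa ax aa xx by auto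
    have "magma_iso ?h null2_carrier null2_op {a, x} f"
      unfolding magma_iso_def null2_carrier_def using b hm by blast
    then show False using A sub unfolding avoids_def by blast
  qed
  show "(\<forall>x\<in>M. \<forall>y\<in>M. \<forall>z\<in>M. f (f x y) z = f x (f y z))
            \<and> (\<forall>x\<in>M. \<forall>y\<in>M. f x (f y x) = x)"
  proof
    show "\<forall>x\<in>M. \<forall>y\<in>M. \<forall>z\<in>M. f (f x y) z = f x (f y z)"
      using assms(2,3) by simp
    show "\<forall>x\<in>M. \<forall>y\<in>M. f x (f y x) = x"
      using assms(3) idem by simp
  qed
qed

end
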